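(* Let $g:[a,b]\to\mathbb R$ be a derivator and let $M=\{f\in\mathrm{AC}_g([a,b]): f'_g\in L^2_g([a,b])\}$. Then $M\subset\mathrm{UC}_g([a,b])$ and $M$ is dense in $\mathrm{UC}_g([a,b])$ with respect to the supremum norm.
   Context: $\mathbb F\in\{\mathbb R,\mathbb C\}$. A derivator is a nondecreasing, left-continuous $g:[a,b]\to\mathbb R$; $\mu_g$ is its Lebesgue–Stieltjes measure ($\mu_g([c,d))=g(d)-g(c)$). For $x\in[a,b)$, $\Delta g(x)=g(x^+)-g(x)$; $D_g=\{x\in[a,b):\Delta g(x)>0\}$; $C_g=\{x\in[a,b]:g$ is constant on $(x-\delta,x+\delta)\cap[a,b]$ for some $\delta>0\}$, an open set whose connected components are intervals $(a_n,b_n)$. The $g$-derivative of $f$ at $t$ is $f'_g(t)=\lim_{s\to t}\frac{f(s)-f(t)}{g(s)-g(t)}$ if $t\notin D_g\cup C_g$; $f'_g(t)=\lim_{s\to t^+}\frac{f(s)-f(t)}{g(s)-g(t)}$ if $t\in D_g$; $f'_g(t)=\lim_{s\to b_n^+}\frac{f(s)-f(b_n)}{g(s)-g(b_n)}$ if $t\in(a_n,b_n)\subset C_g$; whenever these limits exist. $\mathrm{AC}_g([a,b])$ is the set of $g$-absolutely continuous $F:[a,b]\to\mathbb F$: for every $\varepsilon>0$ there is $\delta>0$ such that for every finite family of pairwise disjoint open subintervals $(a_k,b_k)$ of $[a,b]$, $\sum_k(g(b_k)-g(a_k))<\delta$ implies $\sum_k|F(b_k)-F(a_k)|<\varepsilon$;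 equivalently, $F'_g$ exists $\mu_g$-a.e., is $\mu_g$-integrable, and $F(t)=F(a)+\int_{[a,t)}F'_g\,d\mu_g$ for all $t$. $L^2_g([a,b])$ is the Hilbert space of $\mu_g$-measurable $f$ with $\int_{[a,b)}|f|^2d\mu_g<\infty$. $\mathrm{UC}_g([a,b])$ is the Banach space (supremum norm) of uniformly $g$-continuous functions: for every $\varepsilon>0$ there is $\delta>0$ with $|g(x)-g(y)|<\delta\Rightarrow|f(x)-f(y)|<\varepsilon$. *)

theory Defs
  imports "HOL-Analysis.Analysis"
begin

definition derivator :: "(real \<Rightarrow> real) \<Rightarrow> real \<Rightarrow> real \<Rightarrow> bool" where
  "derivator g a b \<longleftrightarrow> a < b \<and> mono_on {a..b} g \<and>
     (\<forall>x\<in>{a<..b}. (g \<longlongrightarrow> g x) (at_left x))"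

definition g_ext :: "(real \<Rightarrow> real) \<Rightarrow> real \<Rightarrow> real \<Rightarrow> real \<Rightarrow> real" where
  "g_ext g a b x = g (max a (min b x))"

text \<open>Lebesgue--Stieltjes measure of g, with mu_g [c,d) = g d - g c.  Built from the
  library's (right-continuous) interval_measure via the reflection x \<mapsto> -x.\<close>
definition mu_g :: "(real \<Rightarrow> real) \<Rightarrow> real \<Rightarrow> real \<Rightarrow> real measure" where
  "mu_g g a b = distr (interval_measure (\<lambda>x. - g_ext g a b (- x))) borel uminus"

definition Delta_g :: "(real \<Rightarrow> real) \<Rightarrow> real \<Rightarrow> real \<Rightarrow> real \<Rightarrow> real" where
  "Delta_g g a b x = Lim (at_right x) g - g x"

definition D_g :: "(real \<Rightarrow> real) \<Rightarrow> real \<Rightarrow> real \<Rightarrow> real set" where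
  "D_g g a b = {x \<in> {a..<b}. Delta_g g a b x > 0}"

definition C_g :: "(real \<Rightarrow> real) \<Rightarrow> real \<Rightarrow> real \<Rightarrow> real set" where
  "C_g g a b = {x \<in> {a..b}. \<exists>\<delta>>0. \<forall>y\<in>{x-\<delta><..<x+\<delta>} \<inter> {a..b}. g y = g x}"

definition comp_right :: "(real \<Rightarrow> real) \<Rightarrow> real \<Rightarrow> real \<Rightarrow> real \<Rightarrow> real" where
  "comp_right g a b t = Sup (connected_component_set (C_g g a b) t)"

definition has_g_deriv ::
  "(real \<Rightarrow> real) \<Rightarrow> real \<Rightarrow> real \<Rightarrow> (real \<Rightarrow> 'a::real_normed_field) \<Rightarrow> real \<Rightarrow> 'a \<Rightarrow> bool" where
  "has_g_deriv g a b f t L \<longleftrightarrow>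
     (if t \<in> C_g g a b then
        (let c = comp_right g a b t in
         ((\<lambda>s. (f s - f c) / of_real (g s - g c)) \<longlongrightarrow> L)
           (at c within {s\<in>{a..b}. c < s \<and> g s \<noteq> g c}))
      else if t \<in> D_g g a b then
        ((\<lambda>s. (f s - f t) / of_real (g s - g t)) \<longlongrightarrow> L)
           (at t within {s\<in>{a..b}. t < s \<and> g s \<noteq> g t})
      else
        ((\<lambda>s. (f s - f t) / of_real (g s - g t)) \<longlongrightarrow> L)
           (at t within {s\<in>{a..b}. g s \<noteq> g t}))"

definition AC_g :: "(real \<Rightarrow> real) \<Rightarrow> real \<Rightarrow> real \<Rightarrow> (real \<Rightarrow> 'a::real_normed_field) set" where
  "AC_g g a b = {F. \<forall>\<epsilon>>0. \<exists>\<delta>>0. \<forall>(n::nat) (u::nat \<Rightarrow> real) v.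
      (\<forall>k<n. a \<le> u k \<and> u k < v k \<and> v k \<le> b) \<longrightarrow>
      (\<forall>j<n. \<forall>k<n. j \<noteq> k \<longrightarrow> {u j<..<v j} \<inter> {u k<..<v k} = {}) \<longrightarrow>
      (\<Sum>k<n. g (v k) - g (u k)) < \<delta> \<longrightarrow>
      (\<Sum>k<n. norm (F (v k) - F (u k))) < \<epsilon>}"

definition in_L2_g :: "(real \<Rightarrow> real) \<Rightarrow> real \<Rightarrow> real \<Rightarrow> (real \<Rightarrow> 'a::{real_normed_field,banach,second_countable_topology}) \<Rightarrow> bool" where
  "in_L2_g g a b h \<longleftrightarrow> h \<in> borel_measurable (mu_g g a b) \<and>
     set_integrable (mu_g g a b) {a..<b} (\<lambda>x. (norm (h x))\<^sup>2)"

definition g_deriv_in_L2 :: "(real \<Rightarrow> real) \<Rightarrow> real \<Rightarrow> real \<Rightarrow> (real \<Rightarrow> 'a::{real_normed_field,banach,second_countable_topology}) \<Rightarrow> bool" where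
  "g_deriv_in_L2 g a b f \<longleftrightarrow> (\<exists>h. in_L2_g g a b h \<and>
     (AE t in mu_g g a b. t \<in> {a..<b} \<longrightarrow> has_g_deriv g a b f t (h t)))"

definition UC_g :: "(real \<Rightarrow> real) \<Rightarrow> real \<Rightarrow> real \<Rightarrow> (real \<Rightarrow> 'a::real_normed_vector) set" where
  "UC_g g a b = {f. \<forall>\<epsilon>>0. \<exists>\<delta>>0. \<forall>x\<in>{a..b}. \<forall>y\<in>{a..b}.
      \<bar>g x - g y\<bar> < \<delta> \<longrightarrow> norm (f x - f y) < \<epsilon>}"

end

theory Submission
  imports Defs
begin

definition sig :: "real \<Rightarrow> real" where
  "sig x = (if x \<le> 0 then 0 else if 1 \<le> x then 1 else 3*x^2 - 2*x^3)"
definition sig' :: "real \<Rightarrow> real" where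
  "sig' x = (if x \<le> 0 then 0 else if 1 \<le> x then 0 else 6*x - 6*x^2)"

lemma sig_deriv: "(sig has_real_derivative sig' x) (at x)"
proof -
  consider "x < 0" | "x = 0" | "0 < x \<and> x < 1" | "x = 1" | "1 < x" by linarith
  then show ?thesis
  proof cases
    case 1
    have "((\<lambda>_. 0::real) has_real_derivative sig' x) (at x)" using 1 by (simp add: sig'_def)
    then show ?thesis
      by (rule has_field_derivative_transform_within_open[where S="{..<0}"]) (use 1 in \<open>auto simp: sig_def\<close>)
  next
    case 5
    have "((\<lambda>_. 1::real) has_real_derivative sig' x) (at x)" using 5 by (simp add: sig'_def)
    then show ?thesis
      by (rule has_field_derivative_transform_within_open[where S="{1<..}"]) (use 5 in \<open>auto simp: sig_def\<close>)
  next
    case 3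
    have "((\<lambda>x. 3*x^2 - 2*x^3::real) has_real_derivative 6*x - 6*x^2) (at x)"
      by (auto intro!: derivative_eq_intros simp: power2_eq_square)
    then have "((\<lambda>x. 3*x^2 - 2*x^3::real) has_real_derivative sig' x) (at x)"
      using 3 by (simp add: sig'_def)
    then show ?thesis
      by (rule has_field_derivative_transform_within_open[where S="{0<..<1}"]) (use 3 in \<open>auto simp: sig_def sig'_def\<close>)
  next
    case 2
    show ?thesis unfolding has_field_derivative_iff
    proof (rule filterlim_split_at)
      have "eventually (\<lambda>y. (sig y - sig x) / (y - x) = 0) (at_left x)"
        using 2 eventually_at_left_real[of "-1" "0::real"] by (auto simp: sig_def elim!: eventually_mono)
      then show "((\<lambda>y. (sig y - sig x) / (y - x)) \<longlongrightarrow> sig' x) (at_left x)"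
        using 2 by (simp add: sig'_def tendsto_eventually)
    next
      have e: "eventually (\<lambda>y. (sig y - sig x) / (y - x) = 3*y - 2*y^2) (at_right x)"
        using 2 eventually_at_right_real[of "0::real" 1]
        by (auto simp: sig_def power2_eq_square power3_eq_cube field_simps elim!: eventually_mono)
      have "((\<lambda>y. 3*y - 2*y^2) \<longlongrightarrow> 3*x - 2*x^2) (at_right x)"
        by (intro tendsto_intros)
      then have "((\<lambda>y. 3*y - 2*y^2) \<longlongrightarrow> sig' x) (at_right x)" using 2 by (simp add: sig'_def)
      then show "((\<lambda>y. (sig y - sig x) / (y - x)) \<longlongrightarrow> sig' x) (at_right x)"
        using tendsto_cong[OF e] by simp
    qed
  next
    case 4
    show ?thesis unfolding has_field_derivative_iff
    proof (rule filterlim_split_at)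
      have "eventually (\<lambda>y. (sig y - sig x) / (y - x) = 0) (at_right x)"
        using 4 eventually_at_right_real[of "1::real" 2]
        by (auto simp: sig_def elim!: eventually_mono)
      then show "((\<lambda>y. (sig y - sig x) / (y - x)) \<longlongrightarrow> sig' x) (at_right x)"
        using 4 by (simp add: sig'_def tendsto_eventually)
    next
      have e: "eventually (\<lambda>y. (sig y - sig x) / (y - x) = -(y - 1)*(2*y+1)) (at_left x)"
        using 4 eventually_at_left_real[of "0::real" 1]
        by (auto simp: sig_def power2_eq_square power3_eq_cube field_simps elim!: eventually_mono)
      have "((\<lambda>y. -(y - 1)*(2*y+1)) \<longlongrightarrow> -(x - 1)*(2*x+1)) (at_left x)"
        by (intro tendsto_intros)
      then have "((\<lambda>y. -(y - 1)*(2*y+1)) \<longlongrightarrow> sig' x) (at_left x)" using 4 by (simp add: sig'_def)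
      then show "((\<lambda>y. (sig y - sig x) / (y - x)) \<longlongrightarrow> sig' x) (at_left x)"
        using tendsto_cong[OF e] by simp
    qed
  qed
qed

lemma sig'_bounds: "0 \<le> sig' x" "sig' x \<le> 2"
proof -
  have "0 \<le> 6*(x-1/2)^2" by simp
  then have "6*x - 6*x^2 \<le> 2" by (simp add: power2_eq_square algebra_simps)
  then show "sig' x \<le> 2" by (simp add: sig'_def)
  show "0 \<le> sig' x" unfolding sig'_def
    using mult_nonneg_nonneg[of "6*x" "1 - x"] by (auto simp: power2_eq_square algebra_simps)
qed

lemma sig_bounds: "0 \<le> sig x" "sig x \<le> 1"
proof -
  show "0 \<le> sig x" unfolding sig_def
    using mult_nonneg_nonneg[of "x^2" "3 - 2*x"] by (auto simp: power2_eq_square power3_eq_cube algebra_simps)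
  have "0 \<le> (1-x)^2*(1+2*x)" if "0 \<le> x" using that by simp
  then show "sig x \<le> 1" unfolding sig_def
    by (auto simp: power2_eq_square power3_eq_cube algebra_simps)
qed

lemma sig_lip: "\<bar>sig x - sig y\<bar> \<le> 2 * \<bar>x - y\<bar>"
proof -
  have *: "\<bar>sig x - sig y\<bar> \<le> 2 * \<bar>x - y\<bar>" if yx: "y < x" for x y
  proof -
    obtain z where "sig x - sig y = (x - y) * sig' z"
      using MVT2[OF yx, where f=sig and f'=sig'] sig_deriv by blast
    moreover have "(x - y) * sig' z \<le> (x - y) * 2" "0 \<le> (x - y) * sig' z"
      using sig'_bounds[of z] yx by (intro mult_left_mono mult_nonneg_nonneg; simp)+
    ultimately show ?thesis using yx by (simp add: abs_if)
  qed
  show ?thesis using *[of x y] *[of y x] by (cases x y rule: linorder_cases) auto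
qed


lemma derivator_D:
  assumes "derivator g a b"
  shows "a < b" "mono_on {a..b} g" "\<And>x. x \<in> {a<..b} \<Longrightarrow> (g \<longlongrightarrow> g x) (at_left x)"
  using assms unfolding derivator_def by auto

lemma gext_eq: "x \<in> {a..b} \<Longrightarrow> g_ext g a b x = g x"
  unfolding g_ext_def by (cases "x = b") (auto simp: max_def min_def)

lemma gext_mono:
  assumes "derivator g a b"
  shows "mono (g_ext g a b)"
proof (rule monoI)
  fix x y :: real assume "x \<le> y"
  have ab: "a < b" using derivator_D[OF assms] by auto
  show "g_ext g a b x \<le> g_ext g a b y" unfolding g_ext_def
    by (rule mono_onD[OF derivator_D(2)[OF assms]]) (use ab \<open>x \<le> y\<close> in auto)
qed

lemma gext_leftcont:
  assumes "derivator g a b"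
  shows "(g_ext g a b \<longlongrightarrow> g_ext g a b y) (at_left y)"
proof -
  have ab: "a < b" using derivator_D[OF assms] by auto
  consider "y \<le> a" | "a < y \<and> y \<le> b" | "b < y" by linarith
  then show ?thesis
  proof cases
    case 1
    have "eventually (\<lambda>x. g_ext g a b x = g_ext g a b y) (at_left y)"
      using eventually_at_left_real[of "y - 1" y] 1 ab
      by (auto simp: g_ext_def elim!: eventually_mono)
    then show ?thesis by (simp add: tendsto_eventually)
  next
    case 3
    have "eventually (\<lambda>x. g_ext g a b x = g_ext g a b y) (at_left y)"
      using eventually_at_left_real[of b y] 3 ab
      by (auto simp: g_ext_def elim!: eventually_mono)
    then show ?thesis by (simp add: tendsto_eventually)
  next
    case 2
    have e: "eventually (\<lambda>x. g_ext g a b x = g x) (at_left y)"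
      using eventually_at_left_real[of a y] 2
      by (auto simp: gext_eq elim!: eventually_mono)
    have "(g \<longlongrightarrow> g y) (at_left y)" using derivator_D(3)[OF assms] 2 by auto
    then show ?thesis using tendsto_cong[OF e] 2 by (simp add: gext_eq)
  qed
qed

lemma sets_mu_g [measurable_cong]: "sets (mu_g g a b) = sets borel"
  by (simp add: mu_g_def)

lemma space_mu_g [simp]: "space (mu_g g a b) = UNIV"
  by (simp add: mu_g_def)

lemma mu_g_Ico:
  assumes "derivator g a b" "c \<le> d"
  shows "emeasure (mu_g g a b) {c..<d} = ennreal (g_ext g a b d - g_ext g a b c)"
proof -
  let ?G = "g_ext g a b"
  let ?F = "\<lambda>x. - ?G (- x)"
  have monoF: "?F x \<le> ?F y" if "x \<le> y" for x y
    using monoD[OF gext_mono[OF assms(1)], of "-y" "-x"] that by simp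
  have contF: "continuous (at_right x) ?F" for x
  proof -
    have "(?G \<longlongrightarrow> ?G (- x)) (at_left (- x))" by (rule gext_leftcont[OF assms(1)])
    then have "((\<lambda>z. ?G (- z)) \<longlongrightarrow> ?G (- x)) (at_right x)"
      unfolding filterlim_at_left_to_right[of _ _ "- x"] by simp
    then have "(?F \<longlongrightarrow> ?F x) (at_right x)" by (intro tendsto_minus)
    then show ?thesis by (simp add: continuous_within)
  qed
  have pre: "uminus -` {c..<d} \<inter> UNIV = {-d<..-c}"
    by auto
  have "emeasure (mu_g g a b) {c..<d} = emeasure (interval_measure ?F) (uminus -` {c..<d} \<inter> space (interval_measure ?F))"
    unfolding mu_g_def by (rule emeasure_distr) auto
  also have "\<dots> = emeasure (interval_measure ?F) {-d<..-c}" using pre by simp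
  also have "\<dots> = ennreal (?F (-c) - ?F (-d))"
    using assms(2) by (intro emeasure_interval_measure_Ioc monoF contF) auto
  finally show ?thesis by simp
qed

lemma right_limit:
  assumes "derivator g a b" "a \<le> t" "t < b"
  shows "(g \<longlongrightarrow> Inf (g ` {t<..b})) (at_right t)" (is "(g \<longlongrightarrow> ?L) _")
proof (rule order_tendstoI)
  have mono: "mono_on {a..b} g" using derivator_D[OF assms(1)] by auto
  have bdd: "bdd_below (g ` {t<..b})"
    using assms by (intro bdd_belowI[of _ "g t"]) (auto intro!: mono_onD[OF mono])
  have ne: "g ` {t<..b} \<noteq> {}" using assms by auto
  fix y assume "y < ?L"
  have "g x > y" if "x \<in> {t<..<b}" for x
    using cInf_lower[OF _ bdd, of "g x"] that \<open>y < ?L\<close> by auto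
  then show "eventually (\<lambda>x. y < g x) (at_right t)"
    using eventually_at_right_real[OF assms(3)] by (auto elim!: eventually_mono)
next
  have mono: "mono_on {a..b} g" using derivator_D[OF assms(1)] by auto
  have ne: "g ` {t<..b} \<noteq> {}" using assms by auto
  fix y assume "?L < y"
  then obtain s where s: "s \<in> {t<..b}" "g s < y" using cInf_lessD[OF ne \<open>?L < y\<close>] by blast
  have "g x < y" if "x \<in> {t<..<s}" for x
    using mono_onD[OF mono, of x s] that s assms by auto
  then show "eventually (\<lambda>x. g x < y) (at_right t)"
    using eventually_at_right_real[of t s] s by (auto elim!: eventually_mono)
qed

lemma right_limit_Lim:
  assumes "derivator g a b" "a \<le> t" "t < b"
  shows "(g \<longlongrightarrow> Lim (at_right t) g) (at_right t)" "g t \<le> Lim (at_right t) g"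
proof -
  have mono: "mono_on {a..b} g" using derivator_D[OF assms(1)] by auto
  have L: "Lim (at_right t) g = Inf (g ` {t<..b})"
    using right_limit[OF assms] by (intro tendsto_Lim) auto
  show "(g \<longlongrightarrow> Lim (at_right t) g) (at_right t)" using right_limit[OF assms] L by simp
  show "g t \<le> Lim (at_right t) g" unfolding L
    using assms by (intro cINF_greatest) (auto intro!: mono_onD[OF mono])
qed

lemma D_g_countable:
  assumes "derivator g a b"
  shows "countable (D_g g a b)"
proof -
  have ab: "a < b" using derivator_D[OF assms] by auto
  have "D_g g a b \<subseteq> {x\<in>{a..b}. \<not> continuous (at x within {a..b}) g}"
  proof
    fix t assume t: "t \<in> D_g g a b"
    then have tab: "a \<le> t" "t < b" and pos: "Lim (at_right t) g - g t > 0"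
      by (auto simp: D_g_def Delta_g_def)
    have "\<not> continuous (at t within {a..b}) g"
    proof
      assume "continuous (at t within {a..b}) g"
      then have "(g \<longlongrightarrow> g t) (at t within {a..b})" by (simp add: continuous_within)
      then have "(g \<longlongrightarrow> g t) (at t within {t..b})" by (rule tendsto_within_subset) (use tab in auto)
      then have "(g \<longlongrightarrow> g t) (at_right t)" using at_within_Icc_at_right[OF tab(2)] by simp
      then have "Lim (at_right t) g = g t" by (intro tendsto_Lim) auto
      then show False using pos by simp
    qed
    then show "t \<in> {x\<in>{a..b}. \<not> continuous (at x within {a..b}) g}" using tab by auto
  qed
  then show ?thesis
    using mono_on_ctble_discont[OF derivator_D(2)[OF assms]] countable_subset by blast
qed


lemma C_g_null:
  assumes "derivator g a b"
  shows "\<exists>N \<in> null_sets (mu_g g a b). C_g g a b \<inter> {a..<b} \<subseteq> N"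
proof -
  define I where "I = (insert a \<rat>) \<times> (\<rat>::real set)"
  define P where "P = (\<lambda>(c,d). if a \<le> c \<and> c \<le> d \<and> d \<le> b \<and> g c = g d then {c..<d} else ({}::real set))"
  have cI: "countable I" unfolding I_def using countable_rat by (intro countable_SIGMA) auto
  have nI: "P i \<in> null_sets (mu_g g a b)" for i
  proof (cases i)
    case (Pair c d)
    show ?thesis
    proof (cases "a \<le> c \<and> c \<le> d \<and> d \<le> b \<and> g c = g d")
      case True
      then have "emeasure (mu_g g a b) {c..<d} = 0"
        using mu_g_Ico[OF assms, of c d] by (simp add: gext_eq)
      then show ?thesis using True Pair by (auto simp: P_def intro!: null_setsI)
    qed (auto simp: P_def Pair)
  qed
  have "(\<Union>i\<in>I. P i) \<in> null_sets (mu_g g a b)"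
    using cI nI by (intro null_sets_UN') auto
  moreover have "C_g g a b \<inter> {a..<b} \<subseteq> (\<Union>i\<in>I. P i)"
  proof
    fix t assume t: "t \<in> C_g g a b \<inter> {a..<b}"
    then obtain \<delta> where d0: "\<delta> > 0" and cst: "\<forall>y\<in>{t-\<delta><..<t+\<delta>} \<inter> {a..b}. g y = g t"
      by (auto simp: C_g_def)
    obtain d where d: "d \<in> \<rat>" "t < d" "d < min (t+\<delta>) b"
      using Rats_dense_in_real[of t "min (t+\<delta>) b"] t d0 by auto
    obtain c where c: "c \<in> insert a \<rat>" "a \<le> c" "c \<le> t" "t - \<delta> < c"
    proof (cases "t = a")
      case True then show ?thesis using that[of a] d0 by auto
    next
      case False
      then obtain c where "c \<in> \<rat>" "max a (t - \<delta>) < c" "c < t"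
        using Rats_dense_in_real[of "max a (t - \<delta>)" t] t d0 by auto
      then show ?thesis using that[of c] by auto
    qed
    have "g c = g t" by (rule cst[rule_format]) (use c t d0 in auto)
    moreover have "g d = g t" by (rule cst[rule_format]) (use d t d0 in auto)
    ultimately have "t \<in> P (c, d)" using c d t by (auto simp: P_def)
    moreover have "(c, d) \<in> I" using c d by (auto simp: I_def)
    ultimately show "t \<in> (\<Union>i\<in>I. P i)" by blast
  qed
  ultimately show ?thesis by blast
qed


lemma AC_imp_UC:
  assumes "derivator g a b" "F \<in> AC_g g a b"
  shows "F \<in> UC_g g a b"
  unfolding UC_g_def
proof (intro CollectI allI impI)
  fix \<epsilon> :: real assume e: "\<epsilon> > 0"
  obtain \<delta> where d: "\<delta> > 0" and ac: "\<forall>(n::nat) (u::nat \<Rightarrow> real) v.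
      (\<forall>k<n. a \<le> u k \<and> u k < v k \<and> v k \<le> b) \<longrightarrow>
      (\<forall>j<n. \<forall>k<n. j \<noteq> k \<longrightarrow> {u j<..<v j} \<inter> {u k<..<v k} = {}) \<longrightarrow>
      (\<Sum>k<n. g (v k) - g (u k)) < \<delta> \<longrightarrow>
      (\<Sum>k<n. norm (F (v k) - F (u k))) < \<epsilon>"
    using assms(2) e unfolding AC_g_def by blast
  have mono: "mono_on {a..b} g" using derivator_D[OF assms(1)] by auto
  have *: "norm (F y - F x) < \<epsilon>" if "x \<in> {a..b}" "y \<in> {a..b}" "x < y" "g y - g x < \<delta>" for x y
    using ac[rule_format, of 1 "\<lambda>_. x" "\<lambda>_. y"] that by auto
  show "\<exists>\<delta>>0. \<forall>x\<in>{a..b}. \<forall>y\<in>{a..b}. \<bar>g x - g y\<bar> < \<delta> \<longrightarrow> norm (F x - F y) < \<epsilon>"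
  proof (intro exI[of _ \<delta>] conjI ballI impI)
    fix x y assume xy: "x \<in> {a..b}" "y \<in> {a..b}" "\<bar>g x - g y\<bar> < \<delta>"
    consider "x < y" | "x = y" | "y < x" by linarith
    then show "norm (F x - F y) < \<epsilon>"
    proof cases
      case 1
      then have "g x \<le> g y" using mono_onD[OF mono] xy by auto
      then show ?thesis using *[of x y] xy 1 by (simp add: norm_minus_commute)
    next
      case 3
      then have "g y \<le> g x" using mono_onD[OF mono] xy by auto
      then show ?thesis using *[of y x] xy 3 by simp
    qed (use e in simp)
  qed (rule d)
qed

lemma lip_tendsto:
  fixes \<Psi> :: "real \<Rightarrow> 'a::real_normed_vector"
  assumes lip: "\<forall>x y. norm (\<Psi> x - \<Psi> y) \<le> L * \<bar>x - y\<bar>" and g: "(g \<longlongrightarrow> l) F"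
  shows "((\<lambda>s. \<Psi> (g s)) \<longlongrightarrow> \<Psi> l) F"
proof -
  have "((\<lambda>s. L * \<bar>g s - l\<bar>) \<longlongrightarrow> L * \<bar>l - l\<bar>) F"
    by (intro tendsto_intros g)
  then have z: "((\<lambda>s. L * \<bar>g s - l\<bar>) \<longlongrightarrow> 0) F" by simp
  have "((\<lambda>s. \<Psi> (g s) - \<Psi> l) \<longlongrightarrow> 0) F"
    by (rule Lim_null_comparison[OF _ z]) (use lip in auto)
  then show ?thesis by (rule LIM_zero_cancel)
qed

lemma AC_of_lip:
  fixes \<Psi> :: "real \<Rightarrow> 'a::real_normed_field"
  assumes "derivator g a b" "L \<ge> 0" "\<forall>x y. norm (\<Psi> x - \<Psi> y) \<le> L * \<bar>x - y\<bar>"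
  shows "(\<lambda>t. \<Psi> (g t)) \<in> AC_g g a b"
  unfolding AC_g_def
proof (intro CollectI allI impI)
  fix \<epsilon> :: real assume e: "\<epsilon> > 0"
  have mono: "mono_on {a..b} g" using derivator_D[OF assms(1)] by auto
  show "\<exists>\<delta>>0. \<forall>(n::nat) (u::nat \<Rightarrow> real) v.
      (\<forall>k<n. a \<le> u k \<and> u k < v k \<and> v k \<le> b) \<longrightarrow>
      (\<forall>j<n. \<forall>k<n. j \<noteq> k \<longrightarrow> {u j<..<v j} \<inter> {u k<..<v k} = {}) \<longrightarrow>
      (\<Sum>k<n. g (v k) - g (u k)) < \<delta> \<longrightarrow>
      (\<Sum>k<n. norm (\<Psi> (g (v k)) - \<Psi> (g (u k)))) < \<epsilon>"
  proof (intro exI[of _ "\<epsilon> / (L + 1)"] conjI allI impI)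
    show "\<epsilon> / (L + 1) > 0" using e assms(2) by simp
    fix n :: nat and u v :: "nat \<Rightarrow> real"
    assume uv: "\<forall>k<n. a \<le> u k \<and> u k < v k \<and> v k \<le> b"
      and S: "(\<Sum>k<n. g (v k) - g (u k)) < \<epsilon> / (L + 1)"
    have "(\<Sum>k<n. norm (\<Psi> (g (v k)) - \<Psi> (g (u k)))) \<le> (\<Sum>k<n. L * (g (v k) - g (u k)))"
    proof (rule sum_mono)
      fix k assume "k \<in> {..<n}"
      then have "g (u k) \<le> g (v k)" using uv mono_onD[OF mono, of "u k" "v k"] by auto
      then show "norm (\<Psi> (g (v k)) - \<Psi> (g (u k))) \<le> L * (g (v k) - g (u k))"
        using assms(3)[rule_format, of "g (v k)" "g (u k)"] by simp
    qed
    also have "\<dots> = L * (\<Sum>k<n. g (v k) - g (u k))" by (simp add: sum_distrib_left)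
    also have "\<dots> \<le> L * (\<epsilon> / (L + 1))" using S assms(2) by (intro mult_left_mono) auto
    also have "\<dots> < \<epsilon>" using e assms(2) by (simp add: field_simps)
    finally show "(\<Sum>k<n. norm (\<Psi> (g (v k)) - \<Psi> (g (u k)))) < \<epsilon>" .
  qed
qed


lemma deriv_at:
  fixes \<Psi> :: "real \<Rightarrow> 'a::real_normed_field"
  assumes der: "derivator g a b"
    and lip: "\<forall>x y. norm (\<Psi> x - \<Psi> y) \<le> L * \<bar>x - y\<bar>"
    and dq: "\<forall>y0. ((\<lambda>y. (\<Psi> y - \<Psi> y0) / of_real (y - y0)) \<longlongrightarrow> \<Psi>' y0) (at y0)"
    and t: "t \<in> {a..<b}" "t \<notin> C_g g a b"
  shows "has_g_deriv g a b (\<lambda>t. \<Psi> (g t)) t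
          (if t \<in> D_g g a b then (\<Psi> (Lim (at_right t) g) - \<Psi> (g t)) / of_real (Lim (at_right t) g - g t)
           else \<Psi>' (g_ext g a b t))"
proof -
  have tab: "a \<le> t" "t < b" using t by auto
  have ab: "a < b" using derivator_D[OF der] by auto
  note RL = right_limit_Lim[OF der tab]
  show ?thesis
  proof (cases "t \<in> D_g g a b")
    case True
    let ?L = "Lim (at_right t) g"
    let ?S = "{s\<in>{a..b}. t < s \<and> g s \<noteq> g t}"
    have pos: "?L - g t > 0" using True by (simp add: D_g_def Delta_g_def)
    have "(g \<longlongrightarrow> ?L) (at t within ?S)"
      by (rule tendsto_within_subset[OF RL(1)]) auto
    then have "((\<lambda>s. (\<Psi> (g s) - \<Psi> (g t)) / of_real (g s - g t)) \<longlongrightarrow>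
        (\<Psi> ?L - \<Psi> (g t)) / of_real (?L - g t)) (at t within ?S)"
      using pos by (intro tendsto_intros lip_tendsto[OF lip]) auto
    then show ?thesis using True t by (simp add: has_g_deriv_def)
  next
    case False
    let ?S = "{s\<in>{a..b}. g s \<noteq> g t}"
    have "Lim (at_right t) g = g t"
      using False RL(2) tab by (simp add: D_g_def Delta_g_def)
    then have right: "(g \<longlongrightarrow> g t) (at_right t)" using RL(1) by simp
    have cont: "(g \<longlongrightarrow> g t) (at t within {a..b})"
    proof (cases "t = a")
      case True
      then show ?thesis using right at_within_Icc_at_right[OF ab] by simp
    next
      case False
      then have "a < t" using tab by simp
      have "(g \<longlongrightarrow> g t) (at_left t)" using derivator_D(3)[OF der] \<open>a < t\<close> tab by auto
      then have "(g \<longlongrightarrow> g t) (at t)" using right by (rule filterlim_split_at)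
      then show ?thesis using at_within_Icc_at[OF \<open>a < t\<close> tab(2)] by simp
    qed
    have "(g \<longlongrightarrow> g t) (at t within ?S)"
      by (rule tendsto_within_subset[OF cont]) auto
    moreover have "eventually (\<lambda>s. g s \<noteq> g t) (at t within ?S)"
      by (auto simp: eventually_at_filter)
    ultimately have gl: "filterlim g (at (g t)) (at t within ?S)"
      by (rule filterlim_atI)
    have "((\<lambda>s. (\<Psi> (g s) - \<Psi> (g t)) / of_real (g s - g t)) \<longlongrightarrow> \<Psi>' (g t)) (at t within ?S)"
      using filterlim_compose[OF dq[rule_format, of "g t"] gl] by simp
    then show ?thesis using False t by (simp add: has_g_deriv_def gext_eq)
  qed
qed


lemma deriv_L2:
  fixes \<Psi> :: "real \<Rightarrow> 'a::{real_normed_field,banach,second_countable_topology}"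
  assumes der: "derivator g a b" and L: "L \<ge> 0"
    and lip: "\<forall>x y. norm (\<Psi> x - \<Psi> y) \<le> L * \<bar>x - y\<bar>"
    and bd: "\<forall>y. norm (\<Psi>' y) \<le> L"
    and dq: "\<forall>y0. ((\<lambda>y. (\<Psi> y - \<Psi> y0) / of_real (y - y0)) \<longlongrightarrow> \<Psi>' y0) (at y0)"
    and meas: "\<Psi>' \<in> borel_measurable borel"
  shows "g_deriv_in_L2 g a b (\<lambda>t. \<Psi> (g t))"
proof -
  define hh where "hh t = (if t \<in> D_g g a b then (\<Psi> (Lim (at_right t) g) - \<Psi> (g t)) / of_real (Lim (at_right t) g - g t)
           else \<Psi>' (g_ext g a b t))" for t
  have hb: "norm (hh t) \<le> L" for t
  proof (cases "t \<in> D_g g a b")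
    case True
    let ?d = "Lim (at_right t) g - g t"
    have "norm (hh t) = norm (\<Psi> (Lim (at_right t) g) - \<Psi> (g t)) / \<bar>?d\<bar>"
      using True unfolding hh_def by (simp add: norm_divide del: of_real_diff)
    also have "\<dots> \<le> L"
    proof (cases "?d = 0")
      case False
      then show ?thesis using lip[rule_format, of "Lim (at_right t) g" "g t"] L
        by (simp add: divide_le_eq)
    qed (use L in simp)
    finally show ?thesis .
  qed (use bd in \<open>simp add: hh_def\<close>)
  have m1: "(\<lambda>t. \<Psi>' (g_ext g a b t)) \<in> borel_measurable borel"
    using measurable_compose[OF borel_measurable_mono[OF gext_mono[OF der]] meas] by (simp add: o_def)
  have m2: "hh \<in> borel_measurable borel"
    by (rule measurable_discrete_difference[OF m1 D_g_countable[OF der]]) (auto simp: hh_def)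
  have mh: "hh \<in> borel_measurable (mu_g g a b)"
    using m2 by (simp add: measurable_cong_sets[OF sets_mu_g refl])
  have fin: "emeasure (mu_g g a b) {a..<b} < \<infinity>"
    using derivator_D(1)[OF der] by (simp add: mu_g_Ico[OF der])
  have "in_L2_g g a b hh"
    unfolding in_L2_g_def set_integrable_def
  proof (intro conjI mh integrableI_bounded_set_indicator[where B="L^2"])
    show "{a..<b} \<in> sets (mu_g g a b)" by simp
    show "(\<lambda>x. (norm (hh x))\<^sup>2) \<in> borel_measurable (mu_g g a b)" using mh by measurable
    show "emeasure (mu_g g a b) {a..<b} < \<infinity>" by (rule fin)
    show "AE x in mu_g g a b. x \<in> {a..<b} \<longrightarrow> norm ((norm (hh x))\<^sup>2) \<le> L\<^sup>2"
      using hb by (auto intro!: power_mono)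
  qed
  moreover have "AE t in mu_g g a b. t \<in> {a..<b} \<longrightarrow> has_g_deriv g a b (\<lambda>t. \<Psi> (g t)) t (hh t)"
  proof -
    obtain N where N: "N \<in> null_sets (mu_g g a b)" "C_g g a b \<inter> {a..<b} \<subseteq> N"
      using C_g_null[OF der] by blast
    show ?thesis
    proof (rule AE_I'[OF N(1)])
      show "{t \<in> space (mu_g g a b). \<not> (t \<in> {a..<b} \<longrightarrow> has_g_deriv g a b (\<lambda>t. \<Psi> (g t)) t (hh t))} \<subseteq> N"
        using deriv_at[OF der lip dq] N(2) unfolding hh_def by blast
    qed
  qed
  ultimately show ?thesis unfolding g_deriv_in_L2_def by blast
qed



lemma sig'_meas [measurable]: "sig' \<in> borel_measurable borel"
  unfolding sig'_def by measurable

lemma approx: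
  fixes f :: "real \<Rightarrow> 'a::{real_normed_field,banach,second_countable_topology}"
  assumes der: "derivator g a b" and fU: "f \<in> UC_g g a b" and e: "\<epsilon> > 0"
  shows "\<exists>\<Psi> \<Psi>' L. L \<ge> 0 \<and> (\<forall>x y. norm (\<Psi> x - \<Psi> y) \<le> L * \<bar>x - y\<bar>) \<and> (\<forall>y. norm (\<Psi>' y) \<le> L)
     \<and> (\<forall>y0. ((\<lambda>y. (\<Psi> y - \<Psi> y0) / of_real (y - y0)) \<longlongrightarrow> \<Psi>' y0) (at y0))
     \<and> \<Psi>' \<in> borel_measurable borel \<and> (\<forall>t\<in>{a..b}. norm (f t - \<Psi> (g t)) < \<epsilon>)"
proof -
  obtain \<delta> where d: "\<delta> > 0" and dU: "\<forall>x\<in>{a..b}. \<forall>y\<in>{a..b}. \<bar>g x - g y\<bar> < \<delta> \<longrightarrow> norm (f x - f y) < \<epsilon>/2"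
    using fU half_gt_zero[OF e] unfolding UC_g_def by blast
  have mono: "mono_on {a..b} g" and ab: "a < b" using derivator_D[OF der] by auto
  define h where "h = \<delta> / 3"
  have h: "h > 0" using d by (simp add: h_def)
  define N where "N = nat \<lceil>(g b - g a) / h\<rceil> + 1"
  define yv where "yv j = g a + real j * h" for j
  define ok where "ok j = (\<exists>s\<in>{a..b}. \<bar>g s - yv j\<bar> \<le> h)" for j
  define sj where "sj j = (SOME s. s \<in> {a..b} \<and> \<bar>g s - yv j\<bar> \<le> h)" for j
  define v where "v j = (if ok j then f (sj j) else 0)" for j
  define D where "D j = v (Suc j) - v j" for j
  define A where "A j y = sig ((y - yv j) / h)" for j y
  define \<Psi> where "\<Psi> y = v 0 + (\<Sum>j<N. of_real (A j y) * D j)" for y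
  define \<Psi>' where "\<Psi>' y = (\<Sum>j<N. of_real (sig' ((y - yv j) / h) / h) * D j)" for y
  define L where "L = (\<Sum>j<N. 2 / h * norm (D j))"
  have L0: "L \<ge> 0" unfolding L_def using h by (intro sum_nonneg) auto
  have diff: "\<Psi> x - \<Psi> y = (\<Sum>j<N. of_real (A j x - A j y) * D j)" for x y
    by (simp add: \<Psi>_def left_diff_distrib sum_subtractf)
  have lip: "\<forall>x y. norm (\<Psi> x - \<Psi> y) \<le> L * \<bar>x - y\<bar>"
  proof (intro allI)
    fix x y
    have "norm (\<Psi> x - \<Psi> y) \<le> (\<Sum>j<N. norm (of_real (A j x - A j y) * D j))"
      unfolding diff by (rule norm_sum)
    also have "\<dots> \<le> (\<Sum>j<N. 2 / h * norm (D j) * \<bar>x - y\<bar>)"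
    proof (rule sum_mono)
      fix j
      have "\<bar>A j x - A j y\<bar> \<le> 2 * \<bar>(x - yv j) / h - (y - yv j) / h\<bar>"
        unfolding A_def by (rule sig_lip)
      also have "\<dots> = 2 / h * \<bar>x - y\<bar>" using h by (simp add: diff_divide_distrib[symmetric] abs_divide)
      finally have "\<bar>A j x - A j y\<bar> \<le> 2 / h * \<bar>x - y\<bar>" .
      then have "\<bar>A j x - A j y\<bar> * norm (D j) \<le> 2 / h * \<bar>x - y\<bar> * norm (D j)"
        by (rule mult_right_mono) simp
      moreover have "norm (of_real (A j x - A j y) * D j) = \<bar>A j x - A j y\<bar> * norm (D j)"
        by (simp add: norm_mult del: of_real_diff)
      ultimately show "norm (of_real (A j x - A j y) * D j) \<le> 2 / h * norm (D j) * \<bar>x - y\<bar>"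
        by (simp add: mult_ac)
    qed
    also have "\<dots> = L * \<bar>x - y\<bar>" by (simp add: L_def sum_distrib_right)
    finally show "norm (\<Psi> x - \<Psi> y) \<le> L * \<bar>x - y\<bar>" .
  qed
  have bd: "\<forall>y. norm (\<Psi>' y) \<le> L"
  proof
    fix y
    have "norm (\<Psi>' y) \<le> (\<Sum>j<N. norm (of_real (sig' ((y - yv j) / h) / h) * D j))"
      unfolding \<Psi>'_def by (rule norm_sum)
    also have "\<dots> \<le> L" unfolding L_def
    proof (rule sum_mono)
      fix j
      have "\<bar>sig' ((y - yv j) / h) / h\<bar> \<le> 2 / h"
        using sig'_bounds[of "(y - yv j) / h"] h by (simp add: abs_divide divide_right_mono)
      then have "\<bar>sig' ((y - yv j) / h) / h\<bar> * norm (D j) \<le> 2 / h * norm (D j)"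
        by (rule mult_right_mono) simp
      moreover have "norm (of_real (sig' ((y - yv j) / h) / h) * D j) = \<bar>sig' ((y - yv j) / h) / h\<bar> * norm (D j)"
        by (simp only: norm_mult norm_of_real)
      ultimately show "norm (of_real (sig' ((y - yv j) / h) / h) * D j) \<le> 2 / h * norm (D j)"
        by simp
    qed
    finally show "norm (\<Psi>' y) \<le> L" .
  qed
  have dq: "\<forall>y0. ((\<lambda>y. (\<Psi> y - \<Psi> y0) / of_real (y - y0)) \<longlongrightarrow> \<Psi>' y0) (at y0)"
  proof
    fix y0
    have eq: "(\<Psi> y - \<Psi> y0) / of_real (y - y0) = (\<Sum>j<N. of_real ((A j y - A j y0) / (y - y0)) * D j)" for y
      unfolding diff sum_divide_distrib
      by (intro sum.cong refl) (simp only: of_real_divide times_divide_eq_left)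
    have "((\<lambda>y. (\<Sum>j<N. of_real ((A j y - A j y0) / (y - y0)) * D j)) \<longlongrightarrow> \<Psi>' y0) (at y0)"
      unfolding \<Psi>'_def
    proof (intro tendsto_sum tendsto_mult tendsto_const tendsto_of_real)
      fix j
      have "((\<lambda>y. (y - yv j) / h) has_real_derivative 1 / h) (at y0)"
        using h by (auto intro!: derivative_eq_intros)
      then have "((\<lambda>y. A j y) has_real_derivative sig' ((y0 - yv j) / h) * (1 / h)) (at y0)"
        unfolding A_def by (rule DERIV_chain2[OF sig_deriv])
      then show "((\<lambda>y. (A j y - A j y0) / (y - y0)) \<longlongrightarrow> sig' ((y0 - yv j) / h) / h) (at y0)"
        unfolding has_field_derivative_iff by simp
    qed
    then show "((\<lambda>y. (\<Psi> y - \<Psi> y0) / of_real (y - y0)) \<longlongrightarrow> \<Psi>' y0) (at y0)"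
      unfolding eq .
  qed
  have meas: "\<Psi>' \<in> borel_measurable borel"
    unfolding \<Psi>'_def by measurable
  have close: "norm (f t - v j) < \<epsilon>/2" if t: "t \<in> {a..b}" and tj: "\<bar>g t - yv j\<bar> \<le> h" for t j
  proof -
    have okj: "ok j" using t tj by (auto simp: ok_def)
    then have s: "sj j \<in> {a..b} \<and> \<bar>g (sj j) - yv j\<bar> \<le> h"
      unfolding sj_def ok_def by (rule someI2_bex) auto
    then have "\<bar>g (sj j) - yv j\<bar> \<le> h" by blast
    then have "\<bar>g t - g (sj j)\<bar> \<le> 2 * h" using tj by arith
    then have "\<bar>g t - g (sj j)\<bar> < \<delta>" using d unfolding h_def by linarith
    then have "norm (f t - f (sj j)) < \<epsilon>/2" using dU t s by blast
    then show ?thesis using okj by (simp add: v_def)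
  qed
  have appr: "\<forall>t\<in>{a..b}. norm (f t - \<Psi> (g t)) < \<epsilon>"
  proof
    fix t assume t: "t \<in> {a..b}"
    define y where "y = g t"
    have ya: "g a \<le> y" "y \<le> g b" using mono_onD[OF mono] t ab by (auto simp: y_def)
    define q where "q = (y - g a) / h"
    have q0: "q \<ge> 0" using ya h by (simp add: q_def)
    define k where "k = nat \<lfloor>q\<rfloor>"
    have rk: "real k = of_int \<lfloor>q\<rfloor>" using q0 by (simp add: k_def)
    have fl: "of_int \<lfloor>q\<rfloor> \<le> q" "q < of_int \<lfloor>q\<rfloor> + 1" by linarith+
    have yk: "yv k \<le> y" "y < yv (Suc k)"
    proof -
      have "real k * h \<le> q * h" using fl rk h by (intro mult_right_mono) auto
      have qh: "q * h = y - g a" using h by (simp add: q_def)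
      then show "yv k \<le> y" using \<open>real k * h \<le> q * h\<close> by (simp add: yv_def)
      have "q * h < (real k + 1) * h" using fl rk h by (intro mult_strict_right_mono) auto
      then show "y < yv (Suc k)" using qh by (simp add: yv_def algebra_simps)
    qed
    have kN: "k < N"
    proof -
      have "q \<le> (g b - g a) / h" using ya h by (simp add: q_def divide_right_mono)
      then have "\<lfloor>q\<rfloor> \<le> \<lceil>(g b - g a) / h\<rceil>" by linarith
      then show ?thesis unfolding N_def k_def by linarith
    qed
    have ysk: "yv (Suc k) = yv k + h" by (simp add: yv_def algebra_simps)
    define lm where "lm = A k y"
    have lam: "0 \<le> lm" "lm \<le> 1" using sig_bounds by (auto simp: lm_def A_def)
    have Psi_y: "\<Psi> y = v k + of_real lm * D k"
    proof -
      have split: "{..<N} = {..<Suc k} \<union> {Suc k..<N}" using kN by auto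
      have z: "(\<Sum>j\<in>{Suc k..<N}. of_real (A j y) * D j) = 0"
      proof (intro sum.neutral ballI)
        fix j assume "j \<in> {Suc k..<N}"
        then have "yv (Suc k) \<le> yv j" using h by (auto simp: yv_def intro!: mult_right_mono)
        then have "(y - yv j) / h \<le> 0" using yk h by (simp add: divide_nonpos_pos)
        then show "of_real (A j y) * D j = 0" by (simp add: A_def sig_def)
      qed
      have o: "(\<Sum>j<k. of_real (A j y) * D j) = (\<Sum>j<k. D j)"
      proof (intro sum.cong refl)
        fix j assume "j \<in> {..<k}"
        then have "yv j + h \<le> yv k" using h
          by (auto simp: yv_def algebra_simps of_nat_less_iff[symmetric] intro!: mult_right_mono[of "real j + 1" "real k" h, simplified])
        then have "1 \<le> (y - yv j) / h" using yk h by (simp add: le_divide_eq)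
        then show "of_real (A j y) * D j = D j" by (simp add: A_def sig_def)
      qed
      have "(\<Sum>j<N. of_real (A j y) * D j) = (\<Sum>j<Suc k. of_real (A j y) * D j)"
        unfolding split by (subst sum.union_disjoint) (auto simp: z)
      also have "\<dots> = (\<Sum>j<k. D j) + of_real lm * D k" by (simp add: o lm_def)
      also have "(\<Sum>j<k. D j) = v k - v 0" unfolding D_def by (rule sum_lessThan_telescope)
      finally show ?thesis by (simp add: \<Psi>_def)
    qed
    have c1: "norm (f t - v k) < \<epsilon>/2" using close[OF t, of k] yk ysk by (simp add: y_def)
    have c2: "norm (f t - v (Suc k)) < \<epsilon>/2" using close[OF t, of "Suc k"] yk ysk by (simp add: y_def)
    have "f t - \<Psi> y = of_real (1 - lm) * (f t - v k) + of_real lm * (f t - v (Suc k))"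
      unfolding Psi_y D_def by (simp add: algebra_simps)
    then have "norm (f t - \<Psi> y) \<le> norm (of_real (1 - lm) * (f t - v k)) + norm (of_real lm * (f t - v (Suc k)))"
      by (simp only: norm_triangle_ineq)
    also have "\<dots> = (1 - lm) * norm (f t - v k) + lm * norm (f t - v (Suc k))"
      using lam by (simp add: norm_mult del: of_real_diff)
    also have "\<dots> \<le> (1 - lm) * (\<epsilon>/2) + lm * (\<epsilon>/2)"
      using lam c1 c2 by (intro add_mono mult_left_mono) auto
    also have "\<dots> = \<epsilon>/2" by (simp add: field_simps)
    also have "\<dots> < \<epsilon>" using e by simp
    finally show "norm (f t - \<Psi> (g t)) < \<epsilon>" by (simp add: y_def)
  qed
  show ?thesis using L0 lip bd dq meas appr by blast
qed


theorem mainTheorem6: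
  fixes g :: "real \<Rightarrow> real" and a b :: real
  assumes "derivator g a b"
  defines "M \<equiv> {f :: real \<Rightarrow> 'a::{real_normed_field,banach,second_countable_topology}.
                  f \<in> AC_g g a b \<and> g_deriv_in_L2 g a b f}"
  shows "M \<subseteq> UC_g g a b \<and>
         (\<forall>f\<in>UC_g g a b. \<forall>\<epsilon>>0. \<exists>m\<in>M. \<forall>t\<in>{a..b}. norm (f t - m t) < \<epsilon>)"
proof
  show "M \<subseteq> UC_g g a b" using AC_imp_UC[OF assms(1)] unfolding M_def by blast
  show "\<forall>f\<in>UC_g g a b. \<forall>\<epsilon>>0. \<exists>m\<in>M. \<forall>t\<in>{a..b}. norm (f t - m t) < \<epsilon>"
  proof (intro ballI allI impI)
    fix f :: "real \<Rightarrow> 'a" and \<epsilon> :: real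
    assume fU: "f \<in> UC_g g a b" and e: "\<epsilon> > 0"
    obtain \<Psi> \<Psi>' L where L: "L \<ge> 0" and lip: "\<forall>x y. norm (\<Psi> x - \<Psi> y) \<le> L * \<bar>x - y\<bar>"
      and bd: "\<forall>y. norm (\<Psi>' y) \<le> L"
      and dq: "\<forall>y0. ((\<lambda>y. (\<Psi> y - \<Psi> y0) / of_real (y - y0)) \<longlongrightarrow> \<Psi>' y0) (at y0)"
      and meas: "\<Psi>' \<in> borel_measurable borel"
      and appr: "\<forall>t\<in>{a..b}. norm (f t - \<Psi> (g t)) < \<epsilon>"
      using approx[OF assms(1) fU e] by blast
    have "(\<lambda>t. \<Psi> (g t)) \<in> M"
      unfolding M_def using AC_of_lip[OF assms(1) L lip] deriv_L2[OF assms(1) L lip bd dq meas] by blast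
    then show "\<exists>m\<in>M. \<forall>t\<in>{a..b}. norm (f t - m t) < \<epsilon>"
      using appr by (intro bexI[where x="\<lambda>t. \<Psi> (g t)"]) auto
  qed
qed

end
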